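(* Let $n\ge2$, $m=0$ and $k$ generic. The space of dimension-two fields of zero momentum (normal-ordered differential polynomials in $\partial\varphi$ of conformal weight 2) commuting with the screenings $E_i$ ($1\le i\le n-1$) and $\Psi$ is three-dimensional. It is spanned by $:\mathcal{H}\mathcal{H}:$, $\partial\mathcal{H}$ (with $\mathcal{H}=\mathcal{H}^{(k)}_{n[0]}$) and the field $$\mathcal{T}^{(k)}_n=\frac12\sum_{i,j\in\{n-1,\dots,1,+,*\}}(\Gamma_n(k)^{-1})_{ij}:A_iA_j:+\sum_{i=1}^{n-1}(n-i)\frac{(i-1)(k+n-1)-1}{2(k+n)}\partial A_i-\frac n2\partial A_+,$$ where $A_+=Q$, $A_*=Y$ and $\Gamma_n(k)$ is the Gram matrix of $(a_{n-1},\dots,a_1,\psi,\xi)$ in this order (rows/columns indexed by $n-1,\dots,1,+,*$). The field $\mathcal{T}^{(k)}_n$ is a Virasoro energy-momentum tensor with central charge $$c_n(k)=-\frac{\big((k+n)(n-1)-n\big)\big((k+n)(n-2)n-n^2+1\big)}{k+n}.$$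
   Context: Setup for $m=0$: fix $n\ge2$, generic $k\in\mathbb{C}$ ($k\ne -n$), $K=k+n$. Let $\varphi=(\varphi_1,\dots,\varphi_{n+1})$ be free scalar fields with $\partial\varphi_i(z)\partial\varphi_j(w)\sim\delta_{ij}(z-w)^{-2}$ and $(\,,\,)$ the standard bilinear form on $\mathbb{C}^{n+1}$. Choose $a_{n-1},\dots,a_1,\psi,\xi\in\mathbb{C}^{n+1}$ with nonzero products $(a_i,a_i)=2K$, $(a_i,a_{i+1})=-K$ ($1\le i\le n-2$), $(a_1,\psi)=-K$, $(\psi,\psi)=1$, $(\psi,\xi)=1$, all other products (including $(\xi,\xi)$, $(a_i,\xi)$) zero. Currents: $A_i=(a_i,\partial\varphi)$, $Q=(\psi,\partial\varphi)$, $Y=(\xi,\partial\varphi)$. Screenings $E_i=\oint e^{(a_i,\varphi)}$, $\Psi=\oint e^{(\psi,\varphi)}$; a field $X(w)$ commutes with $\oint s$ if the residue at $z=w$ of $s(z)X(w)$ vanishes. $\mathcal{H}^{(k)}_{n[0]}=\ell_n(k)Y+\sum_{i=1}^{n-1}\frac{n-i}{n}A_i+Q$ with $\ell_n(k)=\frac{n-1}{n}k+n-2$. *)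

theory Defs
  imports Complex_Main "HOL-Library.Cardinality" "Jordan_Normal_Form.Gauss_Jordan_Elimination"
begin

text \<open>
  The index type 'd (finite, of cardinality n+1) labels the
  free fields phi_1, ..., phi_(n+1); a vector of C^(n+1) is a function 'd => complex,
  and the current (x, d phi) is written h(x) below (d = derivative).
\<close>
definition bil :: "('d::finite \<Rightarrow> complex) \<Rightarrow> ('d \<Rightarrow> complex) \<Rightarrow> complex" where
  "bil x y = (\<Sum>i\<in>UNIV. x i * y i)"

text \<open>
  Zero-momentum fields of conformal weight 2.  A basis of the normal-ordered
  differential polynomials in d phi of weight 2 is given by
  :d phi_a d phi_b: (a, b unordered) and d^2 phi_a.  The field
  Fld2 S v  (S symmetric) stands for
     1/2 * sum_(a,b) S a b :d phi_a d phi_b:  +  sum_a v a d^2 phi_a .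
  This representation is bijective on the weight-2 space when S is symmetric.
\<close>
datatype 'd fld2 = Fld2 (qf: "'d \<Rightarrow> 'd \<Rightarrow> complex") (df: "'d \<Rightarrow> complex")

definition weight2_fields :: "'d fld2 set" where
  "weight2_fields = {X. \<forall>a b. qf X a b = qf X b a}"

definition fld_zero :: "'d fld2" where
  "fld_zero = Fld2 (\<lambda>_ _. 0) (\<lambda>_. 0)"

definition fld_add :: "'d fld2 \<Rightarrow> 'd fld2 \<Rightarrow> 'd fld2" where
  "fld_add X Y = Fld2 (\<lambda>a b. qf X a b + qf Y a b) (\<lambda>a. df X a + df Y a)"

definition fld_scale :: "complex \<Rightarrow> 'd fld2 \<Rightarrow> 'd fld2" where
  "fld_scale c X = Fld2 (\<lambda>a b. c * qf X a b) (\<lambda>a. c * df X a)"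

text \<open>The field :(x, d phi)(y, d phi): .\<close>
definition fld_quad :: "('d \<Rightarrow> complex) \<Rightarrow> ('d \<Rightarrow> complex) \<Rightarrow> 'd fld2" where
  "fld_quad x y = Fld2 (\<lambda>a b. x a * y b + y a * x b) (\<lambda>_. 0)"

text \<open>The field d (x, d phi) = (x, d^2 phi).\<close>
definition fld_deriv :: "('d \<Rightarrow> complex) \<Rightarrow> 'd fld2" where
  "fld_deriv x = Fld2 (\<lambda>_ _. 0) x"

text \<open>
  Commutation with the screening operator  oint e^((alpha, phi)) .
  By Wick's theorem, for X = Fld2 S v the residue at z = w of
  e^((alpha,phi))(z) X(w) equals
     ( (1/2 alpha^T S alpha - (v, alpha)) (alpha, d phi) - (S alpha, d phi) ) e^((alpha,phi))(w)
  (with the usual Wick product), which vanishes iff the following holds.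
\<close>
definition commutes_screening :: "('d::finite \<Rightarrow> complex) \<Rightarrow> 'd fld2 \<Rightarrow> bool" where
  "commutes_screening \<alpha> X \<longleftrightarrow>
     (\<forall>a. (\<Sum>b\<in>UNIV. qf X a b * \<alpha> b)
          = ((1/2) * (\<Sum>c\<in>UNIV. \<Sum>b\<in>UNIV. \<alpha> c * qf X c b * \<alpha> b) - bil (df X) \<alpha>) * \<alpha> a)"

text \<open>
  Weight-3 fields of zero momentum: Fld3 P w stands for
     sum_(a,b) P a b :d^2 phi_a d phi_b:  +  sum_a w a d^3 phi_a   (a basis).
\<close>
datatype 'd fld3 = Fld3 (qf3: "'d \<Rightarrow> 'd \<Rightarrow> complex") (df3: "'d \<Rightarrow> complex")

text \<open>
  The lambda-bracket (OPE) of two weight-2 fields X = Fld2 S v, Y = Fld2 R u: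
    [X_lambda Y] = lambda^3 * c3 + lambda^2 * (w, d phi) + lambda * Z2 + Z3
  i.e. X(z)Y(w) ~ 6 c3/(z-w)^4 + 2(w,d phi)/(z-w)^3 + Z2/(z-w)^2 + Z3/(z-w),
  computed by Wick's theorem:
    c3 = tr(SR)/12 - (u, v),  w = S u - R v,
    Z2 = :(d phi)^T S R (d phi): + 2 (S u, d^2 phi),
    Z3 = :(d^2 phi)^T S R (d phi): + (S u, d^3 phi).
\<close>
record 'd lbracket =
  lb3 :: complex
  lb2 :: "'d \<Rightarrow> complex"
  lb1 :: "'d fld2"
  lb0 :: "'d fld3"

definition mprod :: "('d::finite \<Rightarrow> 'd \<Rightarrow> complex) \<Rightarrow> ('d \<Rightarrow> 'd \<Rightarrow> complex) \<Rightarrow> 'd \<Rightarrow> 'd \<Rightarrow> complex" where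
  "mprod S R = (\<lambda>a b. \<Sum>c\<in>UNIV. S a c * R c b)"

definition mvec :: "('d::finite \<Rightarrow> 'd \<Rightarrow> complex) \<Rightarrow> ('d \<Rightarrow> complex) \<Rightarrow> 'd \<Rightarrow> complex" where
  "mvec S u = (\<lambda>a. \<Sum>c\<in>UNIV. S a c * u c)"

definition lambda_bracket :: "'d::finite fld2 \<Rightarrow> 'd fld2 \<Rightarrow> 'd lbracket" where
  "lambda_bracket X Y =
     (let S = qf X; v = df X; R = qf Y; u = df Y; SR = mprod S R in
      \<lparr> lb3 = (\<Sum>a\<in>UNIV. SR a a) / 12 - bil u v,
        lb2 = (\<lambda>a. mvec S u a - mvec R v a),
        lb1 = Fld2 (\<lambda>a b. SR a b + SR b a) (\<lambda>a. 2 * mvec S u a),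
        lb0 = Fld3 SR (mvec S u) \<rparr>)"

text \<open>
  Virasoro field with central charge c:
  T(z)T(w) ~ (c/2)/(z-w)^4 + 2T(w)/(z-w)^2 + dT(w)/(z-w), i.e.
  [T_lambda T] = (d + 2 lambda) T + c/12 lambda^3.  Here
  d(1/2 :(d phi)^T S (d phi): + (v, d^2 phi)) = :(d^2 phi)^T S (d phi): + (v, d^3 phi).
\<close>
definition is_virasoro :: "'d::finite fld2 \<Rightarrow> complex \<Rightarrow> bool" where
  "is_virasoro T c \<longleftrightarrow>
     lambda_bracket T T =
       \<lparr> lb3 = c / 12, lb2 = (\<lambda>_. 0), lb1 = fld_scale 2 T, lb0 = Fld3 (qf T) (df T) \<rparr>"

text \<open>
  The ordered list of vectors (a_(n-1), ..., a_1, psi, xi), indexed 0..n,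
  and its Gram matrix Gamma_n(k) (a Jordan_Normal_Form matrix).
\<close>
definition gram_basis ::
  "nat \<Rightarrow> (nat \<Rightarrow> 'd \<Rightarrow> complex) \<Rightarrow> ('d \<Rightarrow> complex) \<Rightarrow> ('d \<Rightarrow> complex) \<Rightarrow> nat \<Rightarrow> 'd \<Rightarrow> complex" where
  "gram_basis n a \<psi> \<xi> j = (if j < n - 1 then a (n - 1 - j) else if j = n - 1 then \<psi> else \<xi>)"

definition gram_mat ::
  "nat \<Rightarrow> (nat \<Rightarrow> 'd::finite \<Rightarrow> complex) \<Rightarrow> ('d \<Rightarrow> complex) \<Rightarrow> ('d \<Rightarrow> complex) \<Rightarrow> complex mat" where
  "gram_mat n a \<psi> \<xi> = mat (n + 1) (n + 1)
     (\<lambda>(i, j). bil (gram_basis n a \<psi> \<xi> i) (gram_basis n a \<psi> \<xi> j))"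

definition ell :: "nat \<Rightarrow> complex \<Rightarrow> complex" where
  "ell n k = (of_nat n - 1) / of_nat n * k + of_nat n - 2"

definition hvec ::
  "nat \<Rightarrow> complex \<Rightarrow> (nat \<Rightarrow> 'd \<Rightarrow> complex) \<Rightarrow> ('d \<Rightarrow> complex) \<Rightarrow> ('d \<Rightarrow> complex) \<Rightarrow> 'd \<Rightarrow> complex" where
  "hvec n k a \<psi> \<xi> = (\<lambda>d. ell n k * \<xi> d + (\<Sum>i=1..n-1. (of_nat n - of_nat i) / of_nat n * a i d) + \<psi> d)"

definition Tfield ::
  "nat \<Rightarrow> complex \<Rightarrow> (nat \<Rightarrow> 'd::finite \<Rightarrow> complex) \<Rightarrow> ('d \<Rightarrow> complex) \<Rightarrow> ('d \<Rightarrow> complex) \<Rightarrow> 'd fld2" where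
  "Tfield n k a \<psi> \<xi> =
     (let Gi = the (mat_inverse (gram_mat n a \<psi> \<xi>)); b = gram_basis n a \<psi> \<xi> in
      fld_add
        (Fld2 (\<lambda>x y. (\<Sum>i\<le>n. \<Sum>j\<le>n. (1/2) * Gi $$ (i, j) * (b i x * b j y + b j x * b i y))) (\<lambda>_. 0))
        (fld_deriv (\<lambda>d. (\<Sum>i=1..n-1.
              (of_nat n - of_nat i) * ((of_nat i - 1) * (k + of_nat n - 1) - 1) / (2 * (k + of_nat n)) * a i d)
            - of_nat n / 2 * \<psi> d)))"

definition central_charge :: "nat \<Rightarrow> complex \<Rightarrow> complex" where
  "central_charge n k =
     - (((k + of_nat n) * (of_nat n - 1) - of_nat n) * ((k + of_nat n) * (of_nat n - 2) * of_nat n - of_nat n ^ 2 + 1))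
       / (k + of_nat n)"

definition screening_data ::
  "nat \<Rightarrow> complex \<Rightarrow> (nat \<Rightarrow> 'd::finite \<Rightarrow> complex) \<Rightarrow> ('d \<Rightarrow> complex) \<Rightarrow> ('d \<Rightarrow> complex) \<Rightarrow> bool" where
  "screening_data n k a \<psi> \<xi> \<longleftrightarrow>
     (let K = k + of_nat n in
       (\<forall>i\<in>{1..n-1}. \<forall>j\<in>{1..n-1}.
          bil (a i) (a j) = (if i = j then 2 * K else if i + 1 = j \<or> j + 1 = i then - K else 0))
     \<and> (\<forall>i\<in>{1..n-1}. bil (a i) \<psi> = (if i = 1 then - K else 0))
     \<and> (\<forall>i\<in>{1..n-1}. bil (a i) \<xi> = 0)
     \<and> bil \<psi> \<psi> = 1 \<and> bil \<psi> \<xi> = 1 \<and> bil \<xi> \<xi> = 0)"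

end

theory Submission
  imports Defs "Jordan_Normal_Form.Determinant"
begin


lemma bil_comm: "bil x y = bil y x"
  unfolding bil_def by (simp add: mult.commute)
lemma bil_add_left: "bil (\<lambda>d. x d + y d) z = bil x z + bil y z"
  unfolding bil_def by (simp add: distrib_right sum.distrib)
lemma bil_diff_left: "bil (\<lambda>d. x d - y d) z = bil x z - bil y z"
  unfolding bil_def by (simp add: left_diff_distrib sum_subtractf)
lemma bil_scale_left: "bil (\<lambda>d. c * x d) z = c * bil x z"
  unfolding bil_def by (simp add: sum_distrib_left mult.assoc)
lemma bil_sum_left: "bil (\<lambda>d. \<Sum>i\<in>A. x i d) z = (\<Sum>i\<in>A. bil (x i) z)"
  unfolding bil_def by (simp add: sum_distrib_right sum.swap[of _ A])

lemma sum_tridiag: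
  fixes f :: "nat \<Rightarrow> complex" and K :: complex
  assumes j: "j \<in> {1..n-1}" and fn: "f n = 0"
  shows "(\<Sum>i=1..n-1. f i * (if i = j then 2 * K else if i + 1 = j \<or> j + 1 = i then - K else 0))
     = 2*K*f j - K * (if j = 1 then 0 else f (j-1)) - K * f (j+1)"
proof -
  have "(\<Sum>i=1..n-1. f i * (if i = j then 2 * K else if i + 1 = j \<or> j + 1 = i then - K else 0))
     = (\<Sum>i=1..n-1. (if i = j then 2*K*f i else 0) + ((if i = j - 1 then - K * f i else 0)
           + (if i = j + 1 then - K * f i else 0)))"
    using j by (intro sum.cong) auto
  also have "\<dots> = 2*K*f j - K * (if j = 1 then 0 else f (j-1)) - K * f (j+1)"
  proof (cases "j + 1 = n")
    case True
    then have "f (j+1) = 0" using fn by simp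
    then show ?thesis using j True by (auto simp add: sum.distrib sum.delta)
  next
    case False
    then show ?thesis using j by (auto simp add: sum.distrib sum.delta)
  qed
  finally show ?thesis .
qed


lemma gram_identity:
  fixes b :: "nat \<Rightarrow> 'd::finite \<Rightarrow> complex"
  assumes card: "CARD('d) = N"
    and Gi: "Gi \<in> carrier_mat N N"
    and inv: "Gi * mat N N (\<lambda>(i,j). bil (b i) (b j)) = 1\<^sub>m N"
  shows "(\<Sum>i<N. \<Sum>j<N. Gi $$ (i,j) * b i d * b j d') = (if d = d' then 1 else 0)"
proof -
  obtain e where e: "bij_betw e {0..<N} (UNIV :: 'd set)"
    using ex_bij_betw_nat_finite[of "UNIV :: 'd set"] card by auto
  define M where "M = mat N N (\<lambda>(x,j). b j (e x))"
  have M: "M \<in> carrier_mat N N" unfolding M_def by simp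
  have MT: "transpose_mat M \<in> carrier_mat N N" using M by simp
  have G: "mat N N (\<lambda>(i,j). bil (b i) (b j)) = transpose_mat M * M"
  proof (rule eq_matI)
    fix i j assume i: "i < dim_row (transpose_mat M * M)" and j: "j < dim_col (transpose_mat M * M)"
    then have i': "i < N" and j': "j < N" using M by auto
    have "(transpose_mat M * M) $$ (i,j) = (\<Sum>x\<in>{0..<N}. b i (e x) * b j (e x))"
      using i' j' M by (simp add: M_def scalar_prod_def)
    also have "\<dots> = (\<Sum>d\<in>UNIV. b i d * b j d)"
      using sum.reindex_bij_betw[OF e, of "\<lambda>d. b i d * b j d"] by simp
    finally show "mat N N (\<lambda>(i,j). bil (b i) (b j)) $$ (i,j) = (transpose_mat M * M) $$ (i,j)"
      using i' j' by (simp add: bil_def)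
  qed (use M in auto)
  have "(Gi * transpose_mat M) * M = 1\<^sub>m N"
    using inv G Gi M MT by (simp add: assoc_mult_mat[OF Gi MT M])
  then have R: "M * (Gi * transpose_mat M) = 1\<^sub>m N"
    using mat_mult_left_right_inverse[of "Gi * transpose_mat M" N M] Gi MT M by auto
  have ent: "(\<Sum>i<N. \<Sum>j<N. Gi $$ (i,j) * b i (e x) * b j (e z)) = (if x = z then 1 else 0)"
    if x: "x < N" and z: "z < N" for x z
  proof -
    have "(M * (Gi * transpose_mat M)) $$ (x,z) = (\<Sum>i\<in>{0..<N}. b i (e x) * (\<Sum>j\<in>{0..<N}. Gi $$ (i,j) * b j (e z)))"
      using x z Gi M by (simp add: M_def scalar_prod_def)
    also have "\<dots> = (\<Sum>i<N. \<Sum>j<N. Gi $$ (i,j) * b i (e x) * b j (e z))"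
      by (simp add: sum_distrib_left atLeast0LessThan mult.commute mult.left_commute)
    finally show ?thesis using R x z by simp
  qed
  have surj: "e ` {0..<N} = UNIV" using e by (simp add: bij_betw_def)
  obtain x where x: "x < N" "d = e x" using surj by (metis atLeastLessThan_iff imageE UNIV_I)
  obtain z where z: "z < N" "d' = e z" using surj by (metis atLeastLessThan_iff imageE UNIV_I)
  have "(d = d') = (x = z)" using e x z unfolding bij_betw_def inj_on_def by auto
  then show ?thesis using ent[OF x(1) z(1)] x z by simp
qed


lemma tau_sd: fixes K N x :: complex assumes "K \<noteq> 0"
  shows "K * (2 * ((N - x) * ((x - 1) * (K - 1) - 1) / (2 * K))
     - (N - (x - 1)) * ((x - 1 - 1) * (K - 1) - 1) / (2 * K)
     - (N - (x + 1)) * ((x + 1 - 1) * (K - 1) - 1) / (2 * K)) = K - 1"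
  using assms by (simp add: field_simps) algebra

lemma sumS1: "(\<Sum>i=1..m. (N - of_nat i :: complex)) = N * of_nat m - of_nat m * (of_nat m + 1) / 2"
  by (induction m) (simp_all add: field_simps)

lemma sumS2: "(\<Sum>i=1..m. (N - of_nat i) * (of_nat i - 1 :: complex))
   = N * of_nat m * (of_nat m - 1) / 2 - (of_nat m + 1) * of_nat m * (of_nat m - 1) / 3"
  by (induction m) (simp_all add: field_simps)

lemma cc_alg: fixes K N :: complex assumes "K \<noteq> 0"
  shows "- ((K * (N - 1) - N) * (K * (N - 2) * N - N ^ 2 + 1)) / K / 12
   = (N + 1) / 12 - ((K - 1) * (((K - 1) * (N * (N - 1) * (N - 1 - 1) / 2 - (N - 1 + 1) * (N - 1) * (N - 1 - 1) / 3)
        - (N * (N - 1) - (N - 1) * (N - 1 + 1) / 2)) / (2 * K)) + N / 4)"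
proof -
  have "- ((K * (N - 1) - N) * (K * (N - 2) * N - N ^ 2 + 1)) / K / 12 = - ((K * (N - 1) - N) * (K * (N - 2) * N - N ^ 2 + 1)) / (12 * K)"
    by simp
  also have "\<dots> = (N + 1) / 12 - ((K - 1) * (((K - 1) * (N * (N - 1) * (N - 1 - 1) / 2 - (N - 1 + 1) * (N - 1) * (N - 1 - 1) / 3)
        - (N * (N - 1) - (N - 1) * (N - 1 + 1) / 2)) / (2 * K)) + N / 4)"
    using assms by (simp add: divide_simps) (simp add: algebra_simps power2_eq_square power3_eq_cube)
  finally show ?thesis .
qed

lemma bil_scale_right: "bil x (\<lambda>d. c * y d) = c * bil x y"
  by (simp add: bil_comm[of x] bil_scale_left)

lemma delta_sum: "(\<Sum>y\<in>UNIV. (q * (if (x::'d::finite) = y then 1 else 0)) * (\<alpha> y :: complex)) = q * \<alpha> x"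
proof -
  have "(\<Sum>y\<in>UNIV. (q * (if x = y then 1 else 0)) * \<alpha> y) = (\<Sum>y\<in>UNIV. if y = x then q * \<alpha> x else 0)"
    by (rule sum.cong) auto
  then show ?thesis by simp
qed

lemma rank1_Sv: "(\<Sum>y\<in>UNIV. (p * u x * w y + q * (if x = y then 1 else 0)) * \<alpha> y)
    = p * u x * bil w \<alpha> + q * (\<alpha> x :: complex)"
proof -
  have "(\<Sum>y\<in>UNIV. (p * u x * w y + q * (if x = y then 1 else 0)) * \<alpha> y)
     = (\<Sum>y\<in>UNIV. (p * u x) * (w y * \<alpha> y)) + (\<Sum>y\<in>UNIV. (q * (if x = y then 1 else 0)) * \<alpha> y)"
    by (simp add: sum.distrib[symmetric] algebra_simps)
  also have "\<dots> = p * u x * bil w \<alpha> + q * \<alpha> x"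
    unfolding delta_sum bil_def sum_distrib_left[symmetric] ..
  finally show ?thesis .
qed

lemma quad_rank1: "(\<Sum>c\<in>UNIV. \<Sum>b\<in>UNIV. \<alpha> c * (p * u c * w b + q * (if c = b then 1 else 0)) * \<alpha> b)
   = p * bil u \<alpha> * bil w \<alpha> + q * bil \<alpha> (\<alpha> :: 'd::finite \<Rightarrow> complex)"
proof -
  have "(\<Sum>c\<in>UNIV. \<Sum>b\<in>UNIV. \<alpha> c * (p * u c * w b + q * (if c = b then 1 else 0)) * \<alpha> b)
      = (\<Sum>c\<in>UNIV. \<alpha> c * (p * u c * bil w \<alpha> + q * \<alpha> c))"
  proof (rule sum.cong)
    fix c assume "c \<in> (UNIV :: 'd set)"
    have "(\<Sum>b\<in>UNIV. \<alpha> c * (p * u c * w b + q * (if c = b then 1 else 0)) * \<alpha> b)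
        = \<alpha> c * (\<Sum>b\<in>UNIV. (p * u c * w b + q * (if c = b then 1 else 0)) * \<alpha> b)"
      by (simp add: sum_distrib_left mult.assoc)
    then show "(\<Sum>b\<in>UNIV. \<alpha> c * (p * u c * w b + q * (if c = b then 1 else 0)) * \<alpha> b)
        = \<alpha> c * (p * u c * bil w \<alpha> + q * \<alpha> c)" unfolding rank1_Sv .
  qed simp
  also have "\<dots> = p * bil u \<alpha> * bil w \<alpha> + q * bil \<alpha> \<alpha>"
    unfolding bil_def by (simp add: algebra_simps sum.distrib sum_distrib_left)
  finally show ?thesis .
qed

lemma Sv_sym: assumes "\<forall>a b. S a b = S b a"
  shows "bil (\<lambda>x. \<Sum>y\<in>UNIV. S x y * \<alpha> y) \<beta> = bil \<alpha> (\<lambda>x. \<Sum>y\<in>UNIV. S x y * (\<beta> y :: complex))"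
proof -
  have "bil (\<lambda>x. \<Sum>y\<in>UNIV. S x y * \<alpha> y) \<beta> = (\<Sum>x\<in>UNIV. \<Sum>y\<in>UNIV. S x y * \<alpha> y * \<beta> x)"
    unfolding bil_def by (simp add: sum_distrib_right)
  also have "\<dots> = (\<Sum>y\<in>UNIV. \<Sum>x\<in>UNIV. S y x * \<alpha> y * \<beta> x)"
    by (subst sum.swap) (simp add: assms)
  also have "\<dots> = bil \<alpha> (\<lambda>x. \<Sum>y\<in>UNIV. S x y * \<beta> y)"
    unfolding bil_def by (simp add: sum_distrib_left algebra_simps)
  finally show ?thesis .
qed

lemma quad_Sv: "(\<Sum>c\<in>UNIV. \<Sum>b\<in>UNIV. \<alpha> c * S c b * \<alpha> b) = bil \<alpha> (\<lambda>x. \<Sum>y\<in>UNIV. S x y * (\<alpha> y :: complex))"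
  unfolding bil_def by (simp add: sum_distrib_left mult.assoc)

definition ellX :: "'d::finite fld2 \<Rightarrow> ('d \<Rightarrow> complex) \<Rightarrow> complex" where
  "ellX X \<alpha> = (1/2) * (\<Sum>c\<in>UNIV. \<Sum>b\<in>UNIV. \<alpha> c * qf X c b * \<alpha> b) - bil (df X) \<alpha>"

lemma comm_Sv: "commutes_screening \<alpha> X \<Longrightarrow> (\<lambda>x. \<Sum>y\<in>UNIV. qf X x y * \<alpha> y) = (\<lambda>x. ellX X \<alpha> * \<alpha> x)"
  unfolding commutes_screening_def ellX_def by auto

lemma comm_v: assumes "commutes_screening \<alpha> X"
  shows "bil (df X) \<alpha> = ellX X \<alpha> * (bil \<alpha> \<alpha> / 2 - 1)"
proof -
  have q: "(\<Sum>c\<in>UNIV. \<Sum>b\<in>UNIV. \<alpha> c * qf X c b * \<alpha> b) = ellX X \<alpha> * bil \<alpha> \<alpha>"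
    unfolding quad_Sv comm_Sv[OF assms] bil_scale_right ..
  have "ellX X \<alpha> = (1/2) * (ellX X \<alpha> * bil \<alpha> \<alpha>) - bil (df X) \<alpha>"
    using q unfolding ellX_def[of X \<alpha>] by simp
  then show ?thesis by (simp add: algebra_simps)
qed

lemma ell_eq: assumes sym: "\<forall>a b. qf X a b = qf X b a"
  and ca: "commutes_screening \<alpha> X" and cb: "commutes_screening \<beta> X" and nz: "bil \<alpha> \<beta> \<noteq> 0"
  shows "ellX X \<alpha> = ellX X \<beta>"
proof -
  have "bil (\<lambda>x. \<Sum>y\<in>UNIV. qf X x y * \<alpha> y) \<beta> = bil \<alpha> (\<lambda>x. \<Sum>y\<in>UNIV. qf X x y * \<beta> y)"
    by (rule Sv_sym[OF sym])
  then have "ellX X \<alpha> * bil \<alpha> \<beta> = ellX X \<beta> * bil \<alpha> \<beta>"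
    unfolding comm_Sv[OF ca] comm_Sv[OF cb] bil_scale_left bil_scale_right .
  then show ?thesis using nz by simp
qed

locale sdata =
  fixes n :: nat and k :: complex and a :: "nat \<Rightarrow> 'd::finite \<Rightarrow> complex"
    and \<psi> \<xi> :: "'d \<Rightarrow> complex" and KK :: complex
  assumes n2: "n \<ge> 2" and card: "CARD('d) = n + 1" and K_def: "KK = k + of_nat n" and Kne: "KK \<noteq> 0" and sd: "screening_data n k a \<psi> \<xi>"
begin


lemma aa: "i \<in> {1..n-1} \<Longrightarrow> j \<in> {1..n-1} \<Longrightarrow>
   bil (a i) (a j) = (if i = j then 2 * KK else if i + 1 = j \<or> j + 1 = i then - KK else 0)"
  using sd unfolding screening_data_def Let_def K_def[symmetric] by blast
lemma apsi: "i \<in> {1..n-1} \<Longrightarrow> bil (a i) \<psi> = (if i = 1 then - KK else 0)"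
  using sd unfolding screening_data_def Let_def K_def[symmetric] by blast
lemma axi: "i \<in> {1..n-1} \<Longrightarrow> bil (a i) \<xi> = 0"
  using sd unfolding screening_data_def Let_def K_def[symmetric] by blast
lemma psipsi: "bil \<psi> \<psi> = 1" and psixi: "bil \<psi> \<xi> = 1" and xixi: "bil \<xi> \<xi> = 0"
  using sd unfolding screening_data_def Let_def K_def[symmetric] by auto

definition V :: "(nat \<Rightarrow> complex) \<Rightarrow> complex \<Rightarrow> 'd \<Rightarrow> complex" where
  "V f c = (\<lambda>d. (\<Sum>i=1..n-1. f i * a i d) + f 0 * \<psi> d + c * \<xi> d)"

lemma V_left: "bil (V f c) w = (\<Sum>i=1..n-1. f i * bil (a i) w) + f 0 * bil \<psi> w + c * bil \<xi> w"
  unfolding V_def by (simp add: bil_add_left bil_scale_left bil_sum_left)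

lemma V_a: assumes j: "j \<in> {1..n-1}" and fn: "f n = 0"
  shows "bil (V f c) (a j) = KK * (2 * f j - f (j-1) - f (j+1))"
proof -
  have "(\<Sum>i=1..n-1. f i * bil (a i) (a j))
      = (\<Sum>i=1..n-1. f i * (if i = j then 2 * KK else if i + 1 = j \<or> j + 1 = i then - KK else 0))"
    using j by (intro sum.cong) (auto simp: aa)
  also have "\<dots> = 2*KK*f j - KK * (if j = 1 then 0 else f (j-1)) - KK * f (j+1)"
    by (rule sum_tridiag[where K=KK and n=n and f=f and j=j, OF j fn])
  finally have s: "(\<Sum>i=1..n-1. f i * bil (a i) (a j)) = 2*KK*f j - KK * (if j = 1 then 0 else f (j-1)) - KK * f (j+1)" .
  have p: "bil \<psi> (a j) = (if j = 1 then - KK else 0)" using apsi[OF j] by (simp add: bil_comm)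
  have x: "bil \<xi> (a j) = 0" using axi[OF j] by (simp add: bil_comm)
  show ?thesis unfolding V_left s p x by (auto simp: algebra_simps)
qed

lemma V_psi: "bil (V f c) \<psi> = - KK * f 1 + f 0 + c"
proof -
  have "(\<Sum>i=1..n-1. f i * bil (a i) \<psi>) = (\<Sum>i=1..n-1. (if i = 1 then - KK * f i else 0))"
    by (intro sum.cong) (auto simp: apsi)
  also have "\<dots> = - KK * f 1" proof -
    have "1 \<in> {1..n-1}" using n2 by auto
    then show ?thesis by (simp add: sum.delta)
  qed
  finally show ?thesis unfolding V_left by (simp add: psipsi psixi bil_comm[of \<xi> \<psi>])
qed

lemma V_xi: "bil (V f c) \<xi> = f 0"
proof -
  have "(\<Sum>i=1..n-1. f i * bil (a i) \<xi>) = 0"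
    by (intro sum.neutral) (auto simp: axi)
  then show ?thesis unfolding V_left by (simp add: psixi xixi)
qed

definition hc :: "nat \<Rightarrow> complex" where "hc i = (of_nat n - of_nat i) / of_nat n"
definition Hv where "Hv = V hc (ell n k)"

lemma hvec_eq: "hvec n k a \<psi> \<xi> = Hv"
  using n2 unfolding hvec_def Hv_def V_def hc_def by (auto simp: fun_eq_iff)

lemma H_a: "j \<in> {1..n-1} \<Longrightarrow> bil Hv (a j) = 0"
  unfolding Hv_def
  by (subst V_a) (auto simp: hc_def of_nat_diff field_simps)

lemma H_psi: "bil Hv \<psi> = 0"
  unfolding Hv_def V_psi using n2 by (simp add: hc_def ell_def K_def field_simps)

lemma H_xi: "bil Hv \<xi> = 1"
  unfolding Hv_def V_xi using n2 by (simp add: hc_def)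

definition tc :: "nat \<Rightarrow> complex" where
  "tc i = (of_nat n - of_nat i) * ((of_nat i - 1) * (KK - 1) - 1) / (2 * KK)"
definition tv where "tv = V tc 0"

lemma tc0: "tc 0 = - of_nat n / 2"
  unfolding tc_def using Kne by (simp add: field_simps)
lemma tc1: "tc 1 = - (of_nat n - 1) / (2 * KK)"
  unfolding tc_def using Kne by (simp add: field_simps)

lemma t_a: assumes j: "j \<in> {1..n-1}" shows "bil tv (a j) = KK - 1"
proof -
  have "bil tv (a j) = KK * (2 * tc j - tc (j-1) - tc (j+1))"
    unfolding tv_def by (rule V_a[OF j]) (simp add: tc_def)
  also have "\<dots> = KK - 1"
    unfolding tc_def using j Kne tau_sd[of KK "of_nat n" "of_nat j"] by (simp add: of_nat_diff add.commute)
  finally show ?thesis .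
qed

lemma t_psi: "bil tv \<psi> = - 1/2"
  unfolding tv_def V_psi tc0 tc1 using Kne by (simp add: field_simps)


abbreviation "bb \<equiv> gram_basis n a \<psi> \<xi>"
abbreviation "GG \<equiv> gram_mat n a \<psi> \<xi>"

lemma bb_a: "j \<in> {1..n-1} \<Longrightarrow> bb (n - 1 - j) = a j"
  unfolding gram_basis_def by auto
lemma bb_psi: "bb (n-1) = \<psi>" unfolding gram_basis_def using n2 by auto
lemma bb_xi: "bb n = \<xi>" unfolding gram_basis_def using n2 by auto

lemma reindex_w:
  "(\<Sum>j<n+1. c j * bb j d) = (\<Sum>i=1..n-1. (if i = 0 then c (n-1) else if i < n then c (n-1-i) else 0) * a i d)
      + (if (0::nat) = 0 then c (n-1) else 0) * \<psi> d + c n * \<xi> d"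
proof -
  have nn: "n + 1 = Suc (Suc (n - 1 - 1 + 1))" using n2 by auto
  have s1: "(\<Sum>j<n+1. c j * bb j d) = (\<Sum>j<n-1. c j * bb j d) + c (n-1) * \<psi> d + c n * \<xi> d"
  proof -
    have "{..<n+1} = insert n (insert (n-1) {..<n-1})" using n2 by auto
    moreover have "n \<notin> insert (n-1) {..<n-1}" "n - 1 \<notin> {..<n-1}" using n2 by auto
    ultimately show ?thesis using n2 bb_psi by (simp add: bb_xi algebra_simps)
  qed
  have s2: "(\<Sum>j<n-1. c j * bb j d) = (\<Sum>i=1..n-1. (if i = 0 then c (n-1) else if i < n then c (n-1-i) else 0) * a i d)"
  proof (rule sum.reindex_bij_witness[of _ "\<lambda>i. n - 1 - i" "\<lambda>j. n - 1 - j"])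
    fix j assume j: "j \<in> {..<n-1}"
    then show "n - 1 - (n - 1 - j) = j" "n - 1 - j \<in> {1..n-1}" by auto
    have jj: "n - 1 - j \<in> {1..n-1}" using j by auto
    have "bb j d = a (n-1-j) d" using bb_a[OF jj] j by auto
    then show "(if n - 1 - j = 0 then c (n-1) else if n - 1 - j < n then c (n-1-(n-1-j)) else 0) * a (n - 1 - j) d = c j * bb j d"
      using j by auto
  next
    fix i assume i: "i \<in> {1..n-1}"
    then show "n - 1 - (n - 1 - i) = i" "n - 1 - i \<in> {..<n-1}" by auto
  qed
  show ?thesis using s1 s2 by simp
qed

lemma GG_carrier: "GG \<in> carrier_mat (n+1) (n+1)" unfolding gram_mat_def by simp

lemma GG_kernel: assumes c: "c \<in> carrier_vec (n+1)" and z: "GG *\<^sub>v c = 0\<^sub>v (n+1)"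
  shows "c = 0\<^sub>v (n+1)"
proof -
  define w where "w = (\<lambda>d. \<Sum>j<n+1. c $ j * bb j d)"
  define \<gamma> where "\<gamma> = (\<lambda>i. if i = 0 then c $ (n-1) else if i < n then c $ (n-1-i) else 0)"
  have wV: "w = V \<gamma> (c $ n)"
    unfolding w_def V_def \<gamma>_def by (rule ext, subst reindex_w) simp
  have orth: "bil (bb i) w = 0" if i: "i < n+1" for i
  proof -
    have "(GG *\<^sub>v c) $ i = (\<Sum>j\<in>{0..<n+1}. bil (bb i) (bb j) * c $ j)"
      using i c unfolding gram_mat_def by (simp add: scalar_prod_def)
    also have "\<dots> = bil w (bb i)"
      unfolding w_def bil_sum_left bil_scale_left
      by (simp add: atLeast0LessThan bil_comm mult.commute)
    finally show ?thesis using z i by (simp add: bil_comm)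
  qed
  have g0: "\<gamma> 0 = 0" using orth[of n] V_xi[of \<gamma> "c $ n"] unfolding wV bb_xi by (simp add: bil_comm)
  have gn: "\<gamma> n = 0" unfolding \<gamma>_def using n2 by simp
  have rec: "2 * \<gamma> j - \<gamma> (j-1) - \<gamma> (j+1) = 0" if j: "j \<in> {1..n-1}" for j
  proof -
    have "bil (a j) w = 0" using orth[of "n-1-j"] bb_a[OF j] by simp
    then have "KK * (2 * \<gamma> j - \<gamma> (j-1) - \<gamma> (j+1)) = 0"
      using V_a[where f=\<gamma>, OF j gn, of "c $ n"] unfolding wV by (simp add: bil_comm)
    then show ?thesis using Kne by simp
  qed
  have lin: "j + 1 \<le> n \<longrightarrow> \<gamma> j = of_nat j * \<gamma> 1 \<and> \<gamma> (j+1) = of_nat (j+1) * \<gamma> 1" for j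
  proof (induction j)
    case 0 then show ?case using g0 by simp
  next
    case (Suc j)
    show ?case
    proof
      assume h: "Suc j + 1 \<le> n"
      then have IH: "\<gamma> j = of_nat j * \<gamma> 1 \<and> \<gamma> (j+1) = of_nat (j+1) * \<gamma> 1" using Suc by simp
      have "2 * \<gamma> (j+1) - \<gamma> j - \<gamma> (j+2) = 0" using rec[of "j+1"] h by simp
      then have "\<gamma> (j+2) = of_nat (j+2) * \<gamma> 1" using IH by (simp add: algebra_simps)
      then show "\<gamma> (Suc j) = of_nat (Suc j) * \<gamma> 1 \<and> \<gamma> (Suc j + 1) = of_nat (Suc j + 1) * \<gamma> 1"
        using IH by (simp add: add.commute)
    qed
  qed
  from gn have "of_nat n * \<gamma> 1 = 0" using lin[of "n-1"] n2 by (simp add: Suc_diff_1)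
  then have g1: "\<gamma> 1 = 0" using n2 by simp
  have gall: "\<gamma> j = 0" if "j \<le> n" for j using lin[of j] lin[of "n-1"] that g1 n2
    by (cases "j = n") (auto simp: \<gamma>_def)
  have cn: "c $ n = 0"
    using orth[of "n-1"] V_psi[of \<gamma> "c $ n"] g0 g1 n2 unfolding wV bb_psi by (simp add: bil_comm)
  show ?thesis
  proof (rule eq_vecI)
    fix j assume j: "j < dim_vec (0\<^sub>v (n+1) :: complex vec)"
    then have j': "j \<le> n" by simp
    show "c $ j = 0\<^sub>v (n+1) $ j"
    proof (cases "j = n")
      case True then show ?thesis using cn j by simp
    next
      case False
      then have "j = n - 1 \<or> j < n - 1" using j' by linarith
      then show ?thesis
      proof
        assume "j = n - 1" then show ?thesis using gall[of 0] j \<gamma>_def by simp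
      next
        assume jl: "j < n - 1"
        then have "\<gamma> (n-1-j) = c $ j" unfolding \<gamma>_def by auto
        then show ?thesis using gall[of "n-1-j"] j by simp
      qed
    qed
  qed (use c in simp)
qed


lemma GG_inv: "\<exists>Gi. mat_inverse GG = Some Gi \<and> Gi \<in> carrier_mat (n+1) (n+1) \<and> Gi * GG = 1\<^sub>m (n+1)"
proof -
  have "det GG \<noteq> 0"
    using det_0_iff_vec_prod_zero_field[OF GG_carrier] GG_kernel by blast
  from det_non_zero_imp_unit[OF GG_carrier this, of undefined]
  have U: "GG \<in> Units (ring_mat TYPE(complex) (n+1) undefined)" .
  have "mat_inverse GG \<noteq> None"
    using mat_inverse(1)[OF GG_carrier, of undefined] U by auto
  then obtain Gi where Gi: "mat_inverse GG = Some Gi" by auto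
  from mat_inverse(2)[OF GG_carrier Gi] show ?thesis using Gi by auto
qed

definition Gi where "Gi = the (mat_inverse GG)"

lemma Gi_props: "mat_inverse GG = Some Gi" "Gi \<in> carrier_mat (n+1) (n+1)" "Gi * GG = 1\<^sub>m (n+1)"
  using GG_inv unfolding Gi_def by auto

lemma Qid: "(\<Sum>i<n+1. \<Sum>j<n+1. Gi $$ (i,j) * bb i d * bb j d') = (if d = d' then 1 else 0)"
  by (rule gram_identity[OF card Gi_props(2)]) (use Gi_props(3) in \<open>simp add: gram_mat_def\<close>)

definition eta where "eta = (\<lambda>d. \<Sum>i<n+1. Gi $$ (i,n) * bb i d)"

lemma expand_gen: "w d = (\<Sum>i<n+1. \<Sum>j<n+1. Gi $$ (i,j) * bb i d * bil (bb j) w)"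
proof -
  have "(\<Sum>d'\<in>UNIV. (if d = d' then 1 else 0) * w d') = (\<Sum>d'\<in>UNIV. if d = d' then w d' else 0)"
    by (rule sum.cong) auto
  then have "w d = (\<Sum>d'\<in>UNIV. (if d = d' then 1 else 0) * w d')" by (simp add: sum.delta)
  also have "\<dots> = (\<Sum>d'\<in>UNIV. (\<Sum>i<n+1. \<Sum>j<n+1. Gi $$ (i,j) * bb i d * bb j d') * w d')"
    by (simp only: Qid)
  also have "\<dots> = (\<Sum>i<n+1. \<Sum>j<n+1. Gi $$ (i,j) * bb i d * bil (bb j) w)"
    unfolding bil_def sum_distrib_right sum_distrib_left
    by (subst sum.swap, rule sum.cong, simp, subst sum.swap, rule sum.cong, simp, simp add: mult.assoc)
  finally show ?thesis .
qed

lemma expand0: assumes wa: "\<forall>i\<in>{1..n-1}. bil w (a i) = 0" and wp: "bil w \<psi> = 0"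
  shows "w d = bil \<xi> w * eta d"
proof -
  have z: "bil (bb j) w = 0" if j: "j < n" for j
  proof (cases "j = n - 1")
    case True then show ?thesis using wp bb_psi by (simp add: bil_comm)
  next
    case False
    then have jj: "n - 1 - j \<in> {1..n-1}" using j by auto
    have "bb j = a (n-1-j)" using bb_a[OF jj] j False by auto
    then show ?thesis using wa jj by (simp add: bil_comm)
  qed
  have "w d = (\<Sum>i<n+1. \<Sum>j<n+1. Gi $$ (i,j) * bb i d * bil (bb j) w)" by (rule expand_gen)
  also have "\<dots> = (\<Sum>i<n+1. Gi $$ (i,n) * bb i d * bil \<xi> w)"
    by (rule sum.cong) (simp_all add: z bb_xi)
  also have "\<dots> = bil \<xi> w * eta d"
    unfolding eta_def sum_distrib_left by (rule sum.cong) (auto simp: ac_simps)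
  finally show ?thesis .
qed

lemma Hv_eta: "Hv d = eta d"
  using expand0[of Hv d] H_a H_psi H_xi by (simp add: bil_comm)

lemma expand: assumes "\<forall>i\<in>{1..n-1}. bil w (a i) = 0" and "bil w \<psi> = 0"
  shows "w = (\<lambda>d. bil \<xi> w * Hv d)"
  using expand0[OF assms] Hv_eta by auto


lemma T_eq: "Tfield n k a \<psi> \<xi> = Fld2 (\<lambda>x y. if x = y then 1 else 0) tv"
proof -
  have q: "(\<Sum>i\<le>n. \<Sum>j\<le>n. (1/2) * Gi $$ (i, j) * (bb i x * bb j y + bb j x * bb i y))
      = (if x = y then 1 else 0)" for x y
  proof -
    have "(\<Sum>i\<le>n. \<Sum>j\<le>n. (1/2) * Gi $$ (i, j) * (bb i x * bb j y + bb j x * bb i y))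
       = (1/2) * (\<Sum>i<n+1. \<Sum>j<n+1. Gi $$ (i,j) * bb i x * bb j y)
         + (1/2) * (\<Sum>i<n+1. \<Sum>j<n+1. Gi $$ (i,j) * bb i y * bb j x)"
      unfolding sum_distrib_left lessThan_Suc_atMost[symmetric] Suc_eq_plus1[symmetric] sum.distrib[symmetric]
      by (rule sum.cong, simp, rule sum.cong, simp, simp add: algebra_simps)
    also have "\<dots> = (if x = y then 1 else 0)" unfolding Qid by auto
    finally show ?thesis .
  qed
  have d: "(\<lambda>d. (\<Sum>i=1..n-1.
              (of_nat n - of_nat i) * ((of_nat i - 1) * (k + of_nat n - 1) - 1) / (2 * (k + of_nat n)) * a i d)
            - of_nat n / 2 * \<psi> d) = tv"
    unfolding tv_def V_def tc0[symmetric] K_def[symmetric] using Kne by (simp add: tc_def)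
  show ?thesis unfolding Tfield_def Let_def Gi_def[symmetric] fld_add_def fld_deriv_def
    using q d by simp
qed

lemma sum_tc: "(\<Sum>i=1..n-1. tc i) = ((KK - 1) * (of_nat n * of_nat (n-1) * (of_nat (n-1) - 1) / 2 - (of_nat (n-1) + 1) * of_nat (n-1) * (of_nat (n-1) - 1) / 3)
        - (of_nat n * of_nat (n-1) - of_nat (n-1) * (of_nat (n-1) + 1) / 2)) / (2 * KK)"
proof -
  have "(\<Sum>i=1..n-1. tc i) = (\<Sum>i=1..n-1. ((KK - 1) * ((of_nat n - of_nat i) * (of_nat i - 1)) - (of_nat n - of_nat i)) / (2 * KK))"
    unfolding tc_def by (rule sum.cong) (simp_all add: algebra_simps)
  also have "\<dots> = ((KK - 1) * (\<Sum>i=1..n-1. (of_nat n - of_nat i) * (of_nat i - 1)) - (\<Sum>i=1..n-1. (of_nat n - of_nat i))) / (2 * KK)"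
    by (simp add: sum_divide_distrib[symmetric] sum_subtractf sum_distrib_left)
  finally show ?thesis unfolding sumS1 sumS2 .
qed

lemma tt: "bil tv tv = (of_nat n + 1) / 12 - central_charge n k / 12"
proof -
  have "bil tv tv = (\<Sum>i=1..n-1. tc i * bil (a i) tv) + tc 0 * bil \<psi> tv"
    unfolding tv_def[of] by (subst V_left) simp
  also have "(\<Sum>i=1..n-1. tc i * bil (a i) tv) = (KK - 1) * (\<Sum>i=1..n-1. tc i)"
    unfolding sum_distrib_left by (rule sum.cong) (auto simp: bil_comm[of "a _"] t_a)
  finally have "bil tv tv = (KK - 1) * (\<Sum>i=1..n-1. tc i) + of_nat n / 4"
    unfolding tc0 by (simp add: bil_comm[of \<psi>] t_psi)
  also have "\<dots> = (of_nat n + 1) / 12 - central_charge n k / 12"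
  proof -
    have kk: "k = KK - of_nat n" using K_def by simp
    have nn: "of_nat (n - 1) = (of_nat n - 1 :: complex)" using n2 by (simp add: of_nat_diff)
    show ?thesis unfolding sum_tc central_charge_def kk nn
      using cc_alg[OF Kne, of "of_nat n"] by (simp add: algebra_simps)
  qed
  finally show ?thesis .
qed

lemma T_vir: "is_virasoro (Tfield n k a \<psi> \<xi>) (central_charge n k)"
proof -
  have m: "mprod (\<lambda>x y. if x = y then 1 else 0) (\<lambda>x y. if x = y then 1 else 0) = (\<lambda>(x::'d) y. if x = y then (1::complex) else 0)"
  proof -
    have "(\<Sum>c\<in>UNIV. (if x = c then 1 else 0) * (if c = y then 1 else 0)) = (\<Sum>c\<in>UNIV. if c = x then (if x = y then 1 else 0) else (0::complex))" for x y :: 'd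
      by (rule sum.cong) auto
    then have h: "(\<Sum>c\<in>UNIV. (if x = c then 1 else 0) * (if c = y then 1 else 0)) = (if x = y then 1 else (0::complex))" for x y :: 'd
      by simp
    show ?thesis unfolding mprod_def by (intro ext) (rule h)
  qed
  have v: "mvec (\<lambda>x y. if x = y then 1 else 0) tv = tv"
  proof -
    have "(\<Sum>c\<in>UNIV. (if x = c then 1 else 0) * tv c) = (\<Sum>c\<in>UNIV. if c = x then tv x else 0)" for x :: 'd
      by (rule sum.cong) auto
    then show ?thesis unfolding mvec_def by (simp add: fun_eq_iff)
  qed
  have tr: "(\<Sum>x\<in>(UNIV::'d set). if x = x then (1::complex) else 0) = of_nat n + 1"
    using card by simp
  show ?thesis unfolding is_virasoro_def T_eq lambda_bracket_def Let_def
    using tr tt by (simp add: m v fld_scale_def fun_eq_iff)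
qed


definition Comb where
  "Comb c1 c2 c3 = fld_add (fld_add (fld_scale c1 (fld_quad Hv Hv)) (fld_scale c2 (fld_deriv Hv))) (fld_scale c3 (Tfield n k a \<psi> \<xi>))"

lemma Comb_eq: "Comb c1 c2 c3 = Fld2 (\<lambda>x y. 2 * c1 * Hv x * Hv y + c3 * (if x = y then 1 else 0)) (\<lambda>x. c2 * Hv x + c3 * tv x)"
  by (simp add: Comb_def T_eq fld_add_def fld_scale_def fld_quad_def fld_deriv_def algebra_simps)

lemma Comb_comm: assumes "bil Hv \<alpha> = 0" "bil \<alpha> \<alpha> / 2 - bil tv \<alpha> = 1"
  shows "commutes_screening \<alpha> (Comb c1 c2 c3)"
proof -
  have q: "(\<Sum>c\<in>UNIV. \<Sum>b\<in>UNIV. \<alpha> c * (2 * c1 * Hv c * Hv b + c3 * (if c = b then 1 else 0)) * \<alpha> b)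
     = c3 * bil \<alpha> \<alpha>" using quad_rank1[of \<alpha> "2 * c1" Hv Hv c3] assms(1) by simp
  have bv: "bil (\<lambda>x. c2 * Hv x + c3 * tv x) \<alpha> = c3 * bil tv \<alpha>"
    using assms(1) by (simp add: bil_add_left bil_scale_left)
  have "c3 * \<alpha> x = ((1/2) * (c3 * bil \<alpha> \<alpha>) - c3 * bil tv \<alpha>) * \<alpha> x" for x
  proof -
    have "(1/2) * (c3 * bil \<alpha> \<alpha>) - c3 * bil tv \<alpha> = c3 * (bil \<alpha> \<alpha> / 2 - bil tv \<alpha>)" by (simp add: algebra_simps)
    then show ?thesis using assms(2) by simp
  qed
  then show ?thesis unfolding commutes_screening_def Comb_eq
    using rank1_Sv[of "2 * c1" Hv _ Hv c3 \<alpha>] assms(1) q bv by simp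
qed

lemma Comb_comm_a: "j \<in> {1..n-1} \<Longrightarrow> commutes_screening (a j) (Comb c1 c2 c3)"
  by (rule Comb_comm) (auto simp: H_a t_a aa)

lemma Comb_comm_psi: "commutes_screening \<psi> (Comb c1 c2 c3)"
  by (rule Comb_comm) (auto simp: H_psi t_psi psipsi)

lemma Comb_w2: "Comb c1 c2 c3 \<in> weight2_fields"
  unfolding weight2_fields_def Comb_eq by (simp add: algebra_simps)

lemma Comb_indep: assumes "Comb c1 c2 c3 = fld_zero" shows "c1 = 0 \<and> c2 = 0 \<and> c3 = 0"
proof -
  have S: "2 * c1 * Hv x * Hv y + c3 * (if x = y then 1 else 0) = 0" for x y
    using assms unfolding Comb_eq fld_zero_def by (simp add: fun_eq_iff)
  have D: "c2 * Hv x + c3 * tv x = 0" for x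
    using assms unfolding Comb_eq fld_zero_def by (simp add: fun_eq_iff)
  have "(\<Sum>y\<in>UNIV. (2 * c1 * Hv x * Hv y + c3 * (if x = y then 1 else 0)) * a 1 y) = 0" for x
    using S by simp
  then have "2 * c1 * Hv x * bil Hv (a 1) + c3 * a 1 x = 0" for x
    unfolding rank1_Sv .
  moreover have "bil Hv (a 1) = 0" using H_a[of 1] n2 by (simp add: bil_comm)
  ultimately have "c3 * a 1 x = 0" for x by simp
  then have "(\<lambda>d. c3 * a 1 d) = (\<lambda>d. 0)" by auto
  then have "c3 * bil (a 1) (a 1) = 0" using bil_scale_left[of c3 "a 1" "a 1"] by (simp add: bil_def)
  moreover have "bil (a 1) (a 1) = 2 * KK" using aa[of 1 1] n2 by simp
  ultimately have c3: "c3 = 0" using Kne by simp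
  have "(\<Sum>y\<in>UNIV. (2 * c1 * Hv x * Hv y + c3 * (if x = y then 1 else 0)) * \<xi> y) = 0" for x
    using S by simp
  then have "2 * c1 * Hv x * bil Hv \<xi> = 0" for x unfolding rank1_Sv using c3 by simp
  then have "2 * c1 * Hv x = 0" for x using H_xi by simp
  then have "(\<lambda>x. 2 * c1 * Hv x) = (\<lambda>x. 0)" by (intro ext)
  then have "bil (\<lambda>x. 2 * c1 * Hv x) \<xi> = 0" by (simp add: bil_def)
  then have c1: "c1 = 0" using H_xi by (simp add: bil_scale_left)
  have "c2 * Hv x = 0" for x using D c3 by simp
  then have "(\<lambda>x. c2 * Hv x) = (\<lambda>x. 0)" by (intro ext)
  then have "bil (\<lambda>x. c2 * Hv x) \<xi> = 0" by (simp add: bil_def)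
  then have c2: "c2 = 0" using H_xi by (simp add: bil_scale_left)
  show ?thesis using c1 c2 c3 by simp
qed


lemma subset_dir: assumes w2: "X \<in> weight2_fields"
  and ca: "\<forall>i\<in>{1..n-1}. commutes_screening (a i) X" and cp: "commutes_screening \<psi> X"
  shows "\<exists>c1 c2 c3. X = Comb c1 c2 c3"
proof -
  have sym: "\<forall>a b. qf X a b = qf X b a" using w2 unfolding weight2_fields_def by auto
  define l where "l = ellX X \<psi>"
  have la: "1 \<le> i \<longrightarrow> i \<le> n - 1 \<longrightarrow> ellX X (a i) = l" for i
  proof (induction i)
    case 0 then show ?case by simp
  next
    case (Suc i)
    show ?case
    proof (intro impI)
      assume h: "1 \<le> Suc i" "Suc i \<le> n - 1"
      show "ellX X (a (Suc i)) = l"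
      proof (cases "i = 0")
        case True
        have "bil (a 1) \<psi> \<noteq> 0" using apsi[of 1] n2 Kne by simp
        then show ?thesis using ell_eq[OF sym _ cp] ca h True unfolding l_def by simp
      next
        case False
        have i1: "i \<in> {1..n-1}" "Suc i \<in> {1..n-1}" using h False by auto
        have "bil (a (Suc i)) (a i) \<noteq> 0" using aa[OF i1(2) i1(1)] Kne by simp
        then have "ellX X (a (Suc i)) = ellX X (a i)"
          using ell_eq[OF sym] ca i1 by blast
        then show ?thesis using Suc False h by simp
      qed
    qed
  qed
  have la': "ellX X (a i) = l" if "i \<in> {1..n-1}" for i using la[of i] that by simp
  have Sa: "(\<lambda>x. \<Sum>y\<in>UNIV. qf X x y * a i y) = (\<lambda>x. l * a i x)" if i: "i \<in> {1..n-1}" for i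
    using comm_Sv[of "a i" X] ca i la'[OF i] by simp
  have Sp: "(\<lambda>x. \<Sum>y\<in>UNIV. qf X x y * \<psi> y) = (\<lambda>x. l * \<psi> x)"
    using comm_Sv[OF cp] unfolding l_def .
  have va: "bil (df X) (a i) = l * (KK - 1)" if i: "i \<in> {1..n-1}" for i
    using comm_v[of "a i" X] ca i la'[OF i] aa[OF i i] by simp
  have vp: "bil (df X) \<psi> = - l / 2"
    using comm_v[OF cp] psipsi unfolding l_def by simp
  define \<sigma> where "\<sigma> = (\<lambda>x. (\<Sum>y\<in>UNIV. qf X x y * \<xi> y) - l * \<xi> x)"
  have \<sigma>_orth: "bil \<sigma> \<alpha> = 0" if Sa': "(\<lambda>x. \<Sum>y\<in>UNIV. qf X x y * \<alpha> y) = (\<lambda>x. l * \<alpha> x)" for \<alpha>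
  proof -
    have "bil \<sigma> \<alpha> = bil (\<lambda>x. \<Sum>y\<in>UNIV. qf X x y * \<xi> y) \<alpha> - l * bil \<xi> \<alpha>"
      unfolding \<sigma>_def bil_diff_left bil_scale_left ..
    also have "\<dots> = bil \<xi> (\<lambda>x. \<Sum>y\<in>UNIV. qf X x y * \<alpha> y) - l * bil \<xi> \<alpha>"
      using Sv_sym[OF sym] by simp
    also have "\<dots> = 0" unfolding Sa' bil_scale_right by simp
    finally show ?thesis .
  qed
  define \<mu> where "\<mu> = bil \<xi> \<sigma>"
  have \<sigma>_eq: "\<sigma> = (\<lambda>x. \<mu> * Hv x)"
    unfolding \<mu>_def by (rule expand) (use \<sigma>_orth Sa Sp in auto)
  have S_eq: "qf X x y = 2 * (\<mu> / 2) * Hv x * Hv y + l * (if x = y then 1 else 0)" for x y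
  proof -
    define r where "r = (\<lambda>y. qf X x y - l * (if x = y then 1 else 0))"
    have r_orth: "bil r \<alpha> = 0" if Sa': "(\<lambda>x. \<Sum>y\<in>UNIV. qf X x y * \<alpha> y) = (\<lambda>x. l * \<alpha> x)" for \<alpha>
    proof -
      have "bil r \<alpha> = (\<Sum>y\<in>UNIV. qf X x y * \<alpha> y) - (\<Sum>y\<in>UNIV. (l * (if x = y then 1 else 0)) * \<alpha> y)"
        unfolding r_def bil_diff_left by (simp add: bil_def)
      also have "\<dots> = 0" unfolding delta_sum using fun_cong[OF Sa', of x] by simp
      finally show ?thesis .
    qed
    have r_eq: "r = (\<lambda>y. bil \<xi> r * Hv y)"
      by (rule expand) (use r_orth Sa Sp in auto)
    have "bil \<xi> r = bil r \<xi>" by (rule bil_comm)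
    also have "\<dots> = (\<Sum>y\<in>UNIV. qf X x y * \<xi> y) - (\<Sum>y\<in>UNIV. (l * (if x = y then 1 else 0)) * \<xi> y)"
      unfolding r_def bil_diff_left by (simp add: bil_def)
    also have "\<dots> = \<sigma> x" unfolding delta_sum \<sigma>_def ..
    also have "\<dots> = \<mu> * Hv x" unfolding \<sigma>_eq ..
    finally have "r y = \<mu> * Hv x * Hv y" using fun_cong[OF r_eq, of y] by simp
    then show ?thesis unfolding r_def by (cases "x = y") (auto simp: diff_eq_eq)
  qed
  define v' where "v' = (\<lambda>x. df X x - l * tv x)"
  have v'_eq: "v' = (\<lambda>x. bil \<xi> v' * Hv x)"
  proof (rule expand)
    show "\<forall>i\<in>{1..n-1}. bil v' (a i) = 0"
      unfolding v'_def bil_diff_left bil_scale_left using va t_a by (simp add: mult.commute)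
    show "bil v' \<psi> = 0"
      unfolding v'_def bil_diff_left bil_scale_left using vp t_psi by simp
  qed
  have D_eq: "df X x = bil \<xi> v' * Hv x + l * tv x" for x
    using fun_cong[OF v'_eq, of x] unfolding v'_def by (simp add: algebra_simps)
  have "X = Comb (\<mu> / 2) (bil \<xi> v') l"
    unfolding Comb_eq by (rule fld2.expand) (simp add: fun_eq_iff S_eq D_eq)
  then show ?thesis by blast
qed

end

theorem lemma2p2:
  fixes n :: nat
  assumes "n \<ge> 2" and "CARD('d) = n + 1"
  shows "\<exists>B :: complex set. finite B \<and>
    (\<forall>k. k \<notin> B \<longrightarrow> k \<noteq> - of_nat n \<longrightarrow>
      (\<forall>(a :: nat \<Rightarrow> 'd::finite \<Rightarrow> complex) \<psi> \<xi>. screening_data n k a \<psi> \<xi> \<longrightarrow>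
        (let H = hvec n k a \<psi> \<xi>; HH = fld_quad H H; dH = fld_deriv H;
             T = Tfield n k a \<psi> \<xi> in
          {X \<in> weight2_fields. (\<forall>i\<in>{1..n-1}. commutes_screening (a i) X) \<and> commutes_screening \<psi> X}
            = {fld_add (fld_add (fld_scale c1 HH) (fld_scale c2 dH)) (fld_scale c3 T) | c1 c2 c3. True}
          \<and> (\<forall>c1 c2 c3. fld_add (fld_add (fld_scale c1 HH) (fld_scale c2 dH)) (fld_scale c3 T) = fld_zero
               \<longrightarrow> c1 = 0 \<and> c2 = 0 \<and> c3 = 0)
          \<and> is_virasoro T (central_charge n k))))"
proof (intro exI[of _ "{}"] conjI allI impI)
  show "finite ({} :: complex set)" by simp
next
  fix k :: complex and a :: "nat \<Rightarrow> 'd \<Rightarrow> complex" and \<psi> \<xi>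
  assume k: "k \<notin> {}" "k \<noteq> - of_nat n" and sd: "screening_data n k a \<psi> \<xi>"
  have Kne: "k + of_nat n \<noteq> 0"
  proof
    assume "k + of_nat n = 0"
    then have "k = - of_nat n" by (simp add: eq_neg_iff_add_eq_0)
    with k(2) show False by simp
  qed
  interpret S: sdata n k a \<psi> \<xi> "k + of_nat n"
    using assms Kne sd by unfold_locales auto
  have eq: "{X \<in> weight2_fields. (\<forall>i\<in>{1..n-1}. commutes_screening (a i) X) \<and> commutes_screening \<psi> X}
      = {S.Comb c1 c2 c3 | c1 c2 c3. True}"
  proof -
    have s1: "X \<in> {S.Comb c1 c2 c3 | c1 c2 c3. True}"
      if "X \<in> weight2_fields" "\<forall>i\<in>{1..n-1}. commutes_screening (a i) X" "commutes_screening \<psi> X" for X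
      using S.subset_dir[OF that] by auto
    have s2: "X \<in> weight2_fields \<and> (\<forall>i\<in>{1..n-1}. commutes_screening (a i) X) \<and> commutes_screening \<psi> X"
      if "X \<in> {S.Comb c1 c2 c3 | c1 c2 c3. True}" for X
      using that S.Comb_w2 S.Comb_comm_a S.Comb_comm_psi by auto
    show ?thesis using s1 s2 by blast
  qed
  show "let H = hvec n k a \<psi> \<xi>; HH = fld_quad H H; dH = fld_deriv H;
             T = Tfield n k a \<psi> \<xi> in
          {X \<in> weight2_fields. (\<forall>i\<in>{1..n-1}. commutes_screening (a i) X) \<and> commutes_screening \<psi> X}
            = {fld_add (fld_add (fld_scale c1 HH) (fld_scale c2 dH)) (fld_scale c3 T) | c1 c2 c3. True}
          \<and> (\<forall>c1 c2 c3. fld_add (fld_add (fld_scale c1 HH) (fld_scale c2 dH)) (fld_scale c3 T) = fld_zero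
               \<longrightarrow> c1 = 0 \<and> c2 = 0 \<and> c3 = 0)
          \<and> is_virasoro T (central_charge n k)"
    unfolding Let_def S.hvec_eq S.Comb_def[symmetric]
    apply (rule conjI)
     apply (fact eq)
    apply (rule conjI)
     apply (intro allI impI)
     apply (erule S.Comb_indep)
    apply (rule S.T_vir)
    done
qed

end
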